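(* Fix $\alpha>0$, $\gamma\in(0,1)$, a constant $\bar\rho_i>0$, a finite nonempty multiset $D_{\rho_i}$ of samples $x=(s,a_i,\mathbf{a}_{-i},s')$ with $s,s'\in S$, and a distribution $p_0$ on $S$. For $\nu_i:S\to\mathbb{R}$ let $$\hat e_{\nu_i}(x)=r(s,a_i,\mathbf{a}_{-i})-\alpha\log\frac{\boldsymbol{\pi}_{-i}(\mathbf{a}_{-i}\mid s)}{\boldsymbol{\pi}^D_{-i}(\mathbf{a}_{-i}\mid s,a_i)}+\gamma\nu_i(s')-\nu_i(s),$$ $$L(\nu_i):=\bar\rho_i\,\alpha\,\hat{\mathbf{E}}_{x\in D_{\rho_i}}\Big[\exp\Big(\tfrac1\alpha\hat e_{\nu_i}(x)-1\Big)\Big]+(1-\gamma)\mathbb{E}_{s_0\sim p_0}[\nu_i(s_0)],$$ $$\tilde{\mathcal{L}}(\nu_i):=\alpha\log\Big(\bar\rho_i\,\hat{\mathbf{E}}_{x\in D_{\rho_i}}\Big[\exp\Big(\tfrac1\alpha\hat e_{\nu_i}(x)\Big)\Big]\Big)+(1-\gamma)\mathbb{E}_{s_0\sim p_0}[\nu_i(s_0)].$$ Let $V^*=\arg\min_{\nu_i}L(\nu_i)$ and $\tilde V^*=\arg\min_{\nu_i}\tilde{\mathcal{L}}(\nu_i)$ be the sets of minimizers. Then $L(\nu_i^* )=\tilde{\mathcal{L}}(\tilde\nu_i^* )$ for any $\nu_i^*\in V^*$ and $\tilde\nu_i^*\in\tilde V^*$. Also, for any $\nu_i^*\in V^*$ and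 any $C\in\mathbb{R}$, $\nu_i^*+C\in\tilde V^*$.
   Context: $\hat{\mathbf{E}}_{x\in D}[f(x)]:=\frac{1}{|D|}\sum_{x\in D}f(x)$ is the empirical average over a finite multiset $D$. $r$ is a real-valued reward; $\boldsymbol{\pi}_{-i}(\mathbf{a}_{-i}\mid s)$ and $\boldsymbol{\pi}^D_{-i}(\mathbf{a}_{-i}\mid s,a_i)$ are fixed conditional probability distributions, positive on the samples of $D_{\rho_i}$. The minimizations range over all functions $\nu_i:S\to\mathbb{R}$. *)

theory Defs
  imports "HOL-Probability.Probability"
begin

definition emp_avg :: "'x multiset \<Rightarrow> ('x \<Rightarrow> real) \<Rightarrow> real" where
  "emp_avg D f = (\<Sum>x\<in>#D. f x) / real (size D)"

definition argmin_set :: "('x \<Rightarrow> real) \<Rightarrow> 'x set \<Rightarrow> 'x set" where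
  "argmin_set F A = {x \<in> A. \<forall>y\<in>A. F x \<le> F y}"

definition e_hat ::
  "real \<Rightarrow> real \<Rightarrow> ('s \<Rightarrow> 'a \<Rightarrow> 'b \<Rightarrow> real) \<Rightarrow> ('s \<Rightarrow> 'b pmf) \<Rightarrow> ('s \<Rightarrow> 'a \<Rightarrow> 'b pmf)
   \<Rightarrow> ('s \<Rightarrow> real) \<Rightarrow> 's \<times> 'a \<times> 'b \<times> 's \<Rightarrow> real" where
  "e_hat \<alpha> \<gamma> r pim piD \<nu> x = (case x of (s, ai, am, s') \<Rightarrow>
     r s ai am - \<alpha> * ln (pmf (pim s) am / pmf (piD s ai) am) + \<gamma> * \<nu> s' - \<nu> s)"

definition L_obj ::
  "real \<Rightarrow> real \<Rightarrow> real \<Rightarrow> ('s \<times> 'a \<times> 'b \<times> 's) multiset \<Rightarrow> 's pmf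
   \<Rightarrow> ('s \<Rightarrow> 'a \<Rightarrow> 'b \<Rightarrow> real) \<Rightarrow> ('s \<Rightarrow> 'b pmf) \<Rightarrow> ('s \<Rightarrow> 'a \<Rightarrow> 'b pmf)
   \<Rightarrow> ('s \<Rightarrow> real) \<Rightarrow> real" where
  "L_obj \<alpha> \<gamma> \<rho> D p0 r pim piD \<nu> =
     \<rho> * \<alpha> * emp_avg D (\<lambda>x. exp (e_hat \<alpha> \<gamma> r pim piD \<nu> x / \<alpha> - 1))
     + (1 - \<gamma>) * measure_pmf.expectation p0 \<nu>"

definition Ltilde_obj ::
  "real \<Rightarrow> real \<Rightarrow> real \<Rightarrow> ('s \<times> 'a \<times> 'b \<times> 's) multiset \<Rightarrow> 's pmf
   \<Rightarrow> ('s \<Rightarrow> 'a \<Rightarrow> 'b \<Rightarrow> real) \<Rightarrow> ('s \<Rightarrow> 'b pmf) \<Rightarrow> ('s \<Rightarrow> 'a \<Rightarrow> 'b pmf)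
   \<Rightarrow> ('s \<Rightarrow> real) \<Rightarrow> real" where
  "Ltilde_obj \<alpha> \<gamma> \<rho> D p0 r pim piD \<nu> =
     \<alpha> * ln (\<rho> * emp_avg D (\<lambda>x. exp (e_hat \<alpha> \<gamma> r pim piD \<nu> x / \<alpha>)))
     + (1 - \<gamma>) * measure_pmf.expectation p0 \<nu>"

end

theory Submission
  imports Defs
begin

lemma sum_mset_pos_aux:
  fixes f :: "'x \<Rightarrow> real"
  shows "M \<noteq> {#} \<Longrightarrow> (\<And>x. f x > 0) \<Longrightarrow> (\<Sum>x\<in>#M. f x) > 0"
proof (induction M)
  case empty then show ?case by simp
next
  case (add x M)
  show ?case
  proof (cases "M = {#}")
    case True then show ?thesis using add.prems by simp
  next
    case False then show ?thesis using add by (simp add: add_pos_pos)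
  qed
qed

lemma emp_avg_pos:
  assumes "D \<noteq> {#}" "\<And>x. f x > 0"
  shows "emp_avg D f > 0"
proof -
  have "size D > 0" using assms(1) by (simp add: nonempty_has_size)
  then show ?thesis unfolding emp_avg_def using sum_mset_pos_aux[OF assms] by simp
qed

lemma emp_avg_scale: "emp_avg D (\<lambda>x. c * f x) = c * emp_avg D f"
  unfolding emp_avg_def by (simp add: sum_mset_distrib_left[symmetric])

lemma e_hat_shift:
  "e_hat \<alpha> \<gamma> r pim piD (\<lambda>s. \<nu> s + C) x = e_hat \<alpha> \<gamma> r pim piD \<nu> x - (1 - \<gamma>) * C"
  unfolding e_hat_def by (cases x) (simp add: algebra_simps)

lemma exp_shift_pmf:
  fixes \<nu> :: "'s \<Rightarrow> real"
  assumes "integrable (measure_pmf p0) \<nu>"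
  shows "measure_pmf.expectation p0 (\<lambda>s. \<nu> s + C) = measure_pmf.expectation p0 \<nu> + C"
  using assms by (simp add: integral_add measure_pmf.prob_space)

theorem proposition3:
  fixes \<alpha> \<gamma> \<rho> :: real
    and D :: "('s \<times> 'a \<times> 'b \<times> 's) multiset"
    and p0 :: "'s pmf"
    and r :: "'s \<Rightarrow> 'a \<Rightarrow> 'b \<Rightarrow> real"
    and pim :: "'s \<Rightarrow> 'b pmf"
    and piD :: "'s \<Rightarrow> 'a \<Rightarrow> 'b pmf"
  assumes "\<alpha> > 0" and "0 < \<gamma>" and "\<gamma> < 1" and "\<rho> > 0"
    and "D \<noteq> {#}"
    and "\<And>s ai am s'. (s, ai, am, s') \<in># D \<Longrightarrow> pmf (pim s) am > 0 \<and> pmf (piD s ai) am > 0"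
  defines "Fs \<equiv> {\<nu> :: 's \<Rightarrow> real. integrable (measure_pmf p0) \<nu>}"
  defines "Vstar \<equiv> argmin_set (L_obj \<alpha> \<gamma> \<rho> D p0 r pim piD) Fs"
    and "Vtstar \<equiv> argmin_set (Ltilde_obj \<alpha> \<gamma> \<rho> D p0 r pim piD) Fs"
  shows "(\<forall>\<nu>1\<in>Vstar. \<forall>\<nu>2\<in>Vtstar.
            L_obj \<alpha> \<gamma> \<rho> D p0 r pim piD \<nu>1 = Ltilde_obj \<alpha> \<gamma> \<rho> D p0 r pim piD \<nu>2)
       \<and> (\<forall>\<nu>\<in>Vstar. \<forall>C::real. (\<lambda>s. \<nu> s + C) \<in> Vtstar)"
proof -
  let ?L = "L_obj \<alpha> \<gamma> \<rho> D p0 r pim piD"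
  let ?T = "Ltilde_obj \<alpha> \<gamma> \<rho> D p0 r pim piD"
  let ?e = "e_hat \<alpha> \<gamma> r pim piD"
  define A where "A \<nu> = \<rho> * emp_avg D (\<lambda>x. exp (?e \<nu> x / \<alpha>))" for \<nu>
  define E where "E (\<nu>::'s\<Rightarrow>real) = measure_pmf.expectation p0 \<nu>" for \<nu>
  have Apos: "A \<nu> > 0" for \<nu>
    unfolding A_def using assms(4) emp_avg_pos[OF assms(5)] by simp
  have Tdef: "?T \<nu> = \<alpha> * ln (A \<nu>) + (1 - \<gamma>) * E \<nu>" for \<nu>
    unfolding Ltilde_obj_def A_def E_def by simp
  have Ldef: "?L \<nu> = \<alpha> * exp (-1) * A \<nu> + (1 - \<gamma>) * E \<nu>" for \<nu>
  proof -
    have "(\<lambda>x. exp (?e \<nu> x / \<alpha> - 1)) = (\<lambda>x. exp (-1) * exp (?e \<nu> x / \<alpha>))"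
      by (simp add: exp_diff exp_minus field_simps)
    then show ?thesis unfolding L_obj_def A_def E_def by (simp add: emp_avg_scale)
  qed
  have Ashift: "A (\<lambda>s. \<nu> s + C) = exp (- ((1 - \<gamma>) * C / \<alpha>)) * A \<nu>" for \<nu> C
  proof -
    have "(\<lambda>x. exp (?e (\<lambda>s. \<nu> s + C) x / \<alpha>)) = (\<lambda>x. exp (- ((1 - \<gamma>) * C / \<alpha>)) * exp (?e \<nu> x / \<alpha>))"
      unfolding e_hat_shift
    proof (rule ext)
      fix x
      have "(?e \<nu> x - (1 - \<gamma>) * C) / \<alpha> = - ((1 - \<gamma>) * C / \<alpha>) + ?e \<nu> x / \<alpha>"
        by (simp add: diff_divide_distrib)
      then show "exp ((?e \<nu> x - (1 - \<gamma>) * C) / \<alpha>) = exp (- ((1 - \<gamma>) * C / \<alpha>)) * exp (?e \<nu> x / \<alpha>)"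
        by (simp only: exp_add)
    qed
    then show ?thesis unfolding A_def by (simp add: emp_avg_scale)
  qed
  have Fs_shift: "\<nu> \<in> Fs \<Longrightarrow> (\<lambda>s. \<nu> s + C) \<in> Fs" for \<nu> C
    unfolding Fs_def by simp
  have Eshift: "\<nu> \<in> Fs \<Longrightarrow> E (\<lambda>s. \<nu> s + C) = E \<nu> + C" for \<nu> C
    unfolding Fs_def E_def using exp_shift_pmf by blast
  have Tshift: "\<nu> \<in> Fs \<Longrightarrow> ?T (\<lambda>s. \<nu> s + C) = ?T \<nu>" for \<nu> C
  proof -
    assume "\<nu> \<in> Fs"
    have "ln (A (\<lambda>s. \<nu> s + C)) = - ((1 - \<gamma>) * C / \<alpha>) + ln (A \<nu>)"
      using Apos[of \<nu>] by (simp add: Ashift ln_mult)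
    moreover have "E (\<lambda>s. \<nu> s + C) = E \<nu> + C" using Eshift \<open>\<nu> \<in> Fs\<close> by blast
    ultimately show ?thesis using assms(1) unfolding Tdef by (simp add: field_simps)
  qed
  have LgeT: "?L \<nu> \<ge> ?T \<nu>" for \<nu>
  proof -
    have "ln (A \<nu> * exp (-1)) \<le> A \<nu> * exp (-1) - 1"
      using Apos by (intro ln_le_minus_one) simp
    then have "ln (A \<nu>) \<le> exp (-1) * A \<nu>" using Apos[of \<nu>] by (simp add: ln_mult mult.commute)
    then have "\<alpha> * ln (A \<nu>) \<le> \<alpha> * (exp (-1) * A \<nu>)" using assms(1) by simp
    then show ?thesis by (simp add: Tdef Ldef)
  qed
  have Lopt: "\<nu> \<in> Fs \<Longrightarrow> \<exists>C. ?L (\<lambda>s. \<nu> s + C) = ?T \<nu>" for \<nu>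
  proof -
    assume nu: "\<nu> \<in> Fs"
    define C where "C = \<alpha> * (ln (A \<nu>) - 1) / (1 - \<gamma>)"
    have c: "(1 - \<gamma>) * C / \<alpha> = ln (A \<nu>) - 1" and c2: "(1 - \<gamma>) * C = \<alpha> * (ln (A \<nu>) - 1)"
      unfolding C_def using assms(1,3) by auto
    have "exp (-1) * exp (- ((1 - \<gamma>) * C / \<alpha>)) * A \<nu> = 1"
      unfolding c using Apos[of \<nu>] by (simp add: exp_diff exp_minus)
    moreover have ES: "E (\<lambda>s. \<nu> s + C) = E \<nu> + C" using Eshift nu by blast
    ultimately have "?L (\<lambda>s. \<nu> s + C) = \<alpha> + (1 - \<gamma>) * E \<nu> + (1 - \<gamma>) * C"
      unfolding Ldef Ashift ES by (simp add: algebra_simps)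
    also have "\<dots> = ?T \<nu>" unfolding c2 Tdef by (simp add: algebra_simps)
    finally show ?thesis by blast
  qed
  show ?thesis
  proof (intro conjI ballI allI)
    fix \<nu>1 \<nu>2 assume n1: "\<nu>1 \<in> Vstar" and n2: "\<nu>2 \<in> Vtstar"
    then have f1: "\<nu>1 \<in> Fs" "\<forall>y\<in>Fs. ?L \<nu>1 \<le> ?L y" and f2: "\<nu>2 \<in> Fs" "\<forall>y\<in>Fs. ?T \<nu>2 \<le> ?T y"
      unfolding Vstar_def Vtstar_def argmin_set_def by auto
    obtain C where C: "?L (\<lambda>s. \<nu>2 s + C) = ?T \<nu>2" using Lopt f2(1) by blast
    have "?L \<nu>1 \<le> ?T \<nu>2" using f1(2) Fs_shift[OF f2(1)] C by metis
    moreover have "?T \<nu>2 \<le> ?L \<nu>1" using f2(2) f1(1) LgeT[of \<nu>1] by force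
    ultimately show "?L \<nu>1 = ?T \<nu>2" by simp
  next
    fix \<nu> C assume n: "\<nu> \<in> Vstar"
    then have f1: "\<nu> \<in> Fs" "\<forall>y\<in>Fs. ?L \<nu> \<le> ?L y"
      unfolding Vstar_def argmin_set_def by auto
    have "?T (\<lambda>s. \<nu> s + C) \<le> ?T \<mu>" if mu: "\<mu> \<in> Fs" for \<mu>
    proof -
      obtain C' where C': "?L (\<lambda>s. \<mu> s + C') = ?T \<mu>" using Lopt mu by blast
      have "?T (\<lambda>s. \<nu> s + C) = ?T \<nu>" using Tshift f1(1) by blast
      also have "\<dots> \<le> ?L \<nu>" by (rule LgeT)
      also have "\<dots> \<le> ?L (\<lambda>s. \<mu> s + C')" using f1(2) Fs_shift[OF mu] by blast
      finally show ?thesis using C' by simp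
    qed
    then show "(\<lambda>s. \<nu> s + C) \<in> Vtstar"
      unfolding Vtstar_def argmin_set_def using Fs_shift[OF f1(1)] by blast
  qed
qed

end
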